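(* Let $f_1(x)=\log(1+x^2)$ for $x\in\mathbb R$, and let $f_1^{(4)}$ denote its fourth derivative. Then \[ \int_{\mathbb R} f_1^{(4)}(x)\, f_1(x)^3\,dx<0 . \] *)

theory Defs
  imports "HOL-Analysis.Analysis"
begin

definition f1 :: "real \<Rightarrow> real" where
  "f1 x = ln (1 + x\<^sup>2)"

end

theory Submission
  imports Defs "HOL-Real_Asymp.Real_Asymp"
begin

definition u1 :: "real \<Rightarrow> real" where "u1 x = 2*x/(1+x\<^sup>2)"
definition u2 :: "real \<Rightarrow> real" where "u2 x = 2*(1-x\<^sup>2)/(1+x\<^sup>2)^2"
definition u3 :: "real \<Rightarrow> real" where "u3 x = 4*x*(x\<^sup>2-3)/(1+x\<^sup>2)^3"
definition u4 :: "real \<Rightarrow> real" where "u4 x = 12*(6*x\<^sup>2-x^4-1)/(1+x\<^sup>2)^4"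

lemma pos1: "(1::real)+x\<^sup>2 > 0" by (simp add: add_pos_nonneg)

lemma d0: "(f1 has_real_derivative u1 x) (at x)"
  unfolding f1_def [abs_def] u1_def
  using pos1[of x]
  by (auto intro!: derivative_eq_intros simp: field_simps)

lemma d1: "(u1 has_real_derivative u2 x) (at x)"
  unfolding u1_def [abs_def] u2_def
  using pos1[of x]
  by (auto intro!: derivative_eq_intros simp: field_simps power2_eq_square; algebra)

lemma d2: "(u2 has_real_derivative u3 x) (at x)"
  unfolding u2_def [abs_def] u3_def
  using pos1[of x]
  apply (auto intro!: derivative_eq_intros simp: field_simps)
  by algebra

lemma d3: "(u3 has_real_derivative u4 x) (at x)"
  unfolding u3_def [abs_def] u4_def
  using pos1[of x]
  apply (auto intro!: derivative_eq_intros simp: field_simps)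
  by algebra

lemma D4: "(deriv ^^ 4) f1 = u4"
proof -
  have "deriv f1 = u1" using d0 DERIV_imp_deriv by blast
  moreover have "deriv u1 = u2" using d1 DERIV_imp_deriv by blast
  moreover have "deriv u2 = u3" using d2 DERIV_imp_deriv by blast
  moreover have "deriv u3 = u4" using d3 DERIV_imp_deriv by blast
  ultimately show ?thesis by (simp add: numeral_eq_Suc)
qed

lemma int_inv: "integrable lborel (\<lambda>x::real. 1/(1+x\<^sup>2))"
proof -
  have "set_integrable lborel (einterval (-\<infinity>) \<infinity>) (\<lambda>x::real. 1/(1+x\<^sup>2))"
  proof (rule interval_integral_FTC_nonneg(1)[where F=arctan and A="-(pi/2)" and B="pi/2"])
    fix x :: real
    show "DERIV arctan x :> 1/(1+x\<^sup>2)"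
      by (auto intro!: derivative_eq_intros simp: field_simps power2_eq_square)
    have "1 + x\<^sup>2 \<noteq> 0" by (smt (verit) zero_le_power2)
    then show "isCont (\<lambda>x::real. 1/(1+x\<^sup>2)) x" by (auto intro!: continuous_intros)
  qed (auto simp: ereal_tendsto_simps1 tendsto_arctan_at_top tendsto_arctan_at_bot)
  then show ?thesis by (simp add: set_integrable_def)
qed

lemma lim1: "((\<lambda>x::real. (ln (1+x\<^sup>2))^3 * x / (1+x\<^sup>2)^2) \<longlongrightarrow> 0) at_top" by real_asymp
lemma lim2: "((\<lambda>x::real. (ln (1+x\<^sup>2))^3 * x / (1+x\<^sup>2)^2) \<longlongrightarrow> 0) at_bot" by real_asymp
lemma lim3: "((\<lambda>x::real. 3 * arctan x + x / sqrt (1+x\<^sup>2)^5) \<longlongrightarrow> 3*pi/2) at_top" by real_asymp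

definition s :: "real \<Rightarrow> real" where "s x = sqrt (1+x\<^sup>2)"

lemma s_pos: "s x > 0" unfolding s_def using pos1[of x] by simp
lemma s_ge1: "s x \<ge> 1" unfolding s_def by simp
lemma s_sq: "s x ^ 2 = 1 + x\<^sup>2" unfolding s_def using pos1[of x] by simp

lemma ds: "(s has_real_derivative x / s x) (at x)"
  unfolding s_def [abs_def] using pos1[of x]
  by (auto intro!: derivative_eq_intros simp: field_simps)

lemma dA1: "((\<lambda>x. x / s x ^ 1) has_real_derivative (0/s x^1 + 1/s x^3)) (at x)"
  using s_pos[of x] s_sq[of x]
  by (auto intro!: derivative_eq_intros ds simp: field_simps; algebra)

lemma dA2: "((\<lambda>x. x / s x ^ 2) has_real_derivative (-1/s x^2 + 2/s x^4)) (at x)"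
  using s_pos[of x] s_sq[of x, symmetric]
  by (auto intro!: derivative_eq_intros ds simp: field_simps; algebra)

lemma dA3: "((\<lambda>x. x / s x ^ 3) has_real_derivative (-2/s x^3 + 3/s x^5)) (at x)"
  using s_pos[of x] s_sq[of x]
  by (auto intro!: derivative_eq_intros ds simp: field_simps; algebra)

lemma dA4: "((\<lambda>x. x / s x ^ 4) has_real_derivative (-3/s x^4 + 4/s x^6)) (at x)"
  using s_pos[of x] s_sq[of x]
  by (auto intro!: derivative_eq_intros ds simp: field_simps; algebra)

lemma dA5: "((\<lambda>x. x / s x ^ 5) has_real_derivative (-4/s x^5 + 5/s x^7)) (at x)"
  using s_pos[of x] s_sq[of x]
  by (auto intro!: derivative_eq_intros ds simp: field_simps; algebra)

lemma dA6: "((\<lambda>x. x / s x ^ 6) has_real_derivative (-5/s x^6 + 6/s x^8)) (at x)"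
  using s_pos[of x] s_sq[of x]
  by (auto intro!: derivative_eq_intros ds simp: field_simps; algebra)

lemma dA7: "((\<lambda>x. x / s x ^ 7) has_real_derivative (-6/s x^7 + 7/s x^9)) (at x)"
  using s_pos[of x] s_sq[of x]
  by (auto intro!: derivative_eq_intros ds simp: field_simps; algebra)

definition K :: "real \<Rightarrow> real" where
 "K x = 1392/35 * (x / s x ^ 1) - 26 * (x / s x ^ 2) - 144/35 * (x / s x ^ 3) + 76/3 * (x / s x ^ 4)
   + 1152/35 * (x / s x ^ 5) - 208/3 * (x / s x ^ 6) + 192/7 * (x / s x ^ 7) - 26 * arctan x"

definition kk :: "real \<Rightarrow> real" where
 "kk x = 48/s x^3 - 144/s x^5 + 192/s x^9 - 128/s x^4 + 448/s x^6 - 416/s x^8"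

lemma dK: "(K has_real_derivative kk x) (at x)"
proof -
  have "(K has_real_derivative
    (1392/35 * (0/s x^1 + 1/s x^3) - 26 * (-1/s x^2 + 2/s x^4) - 144/35 * (-2/s x^3 + 3/s x^5)
     + 76/3 * (-3/s x^4 + 4/s x^6) + 1152/35 * (-4/s x^5 + 5/s x^7) - 208/3 * (-5/s x^6 + 6/s x^8)
     + 192/7 * (-6/s x^7 + 7/s x^9) - 26 * inverse (1 + x\<^sup>2))) (at x)"
    unfolding K_def [abs_def]
    by (intro DERIV_add DERIV_diff DERIV_cmult dA1 dA2 dA3 dA4 dA5 dA6 dA7 DERIV_arctan)
  moreover have "(1392/35 * (0/s x^1 + 1/s x^3) - 26 * (-1/s x^2 + 2/s x^4) - 144/35 * (-2/s x^3 + 3/s x^5)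
     + 76/3 * (-3/s x^4 + 4/s x^6) + 1152/35 * (-4/s x^5 + 5/s x^7) - 208/3 * (-5/s x^6 + 6/s x^8)
     + 192/7 * (-6/s x^7 + 7/s x^9) - 26 * inverse (1 + x\<^sup>2)) = kk x"
    unfolding kk_def s_sq[symmetric] using s_pos[of x]
    by (simp add: field_simps) (simp add: algebra_simps)?
  ultimately show ?thesis by simp
qed

lemma kk_eq: "12 * (s x - 2 + 1 / s x) * u2 x ^ 2 - 2 * u1 x ^ 4 = kk x"
proof -
  have a: "1 + x\<^sup>2 = s x ^ 2" by (simp add: s_sq)
  have a': "x\<^sup>2 = s x ^ 2 - 1" using a by simp
  have "x ^ 4 = (x\<^sup>2)\<^sup>2" by simp
  also have "\<dots> = (s x ^ 2 - 1)^2" by (simp only: a')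
  finally have b: "x ^ 4 = (s x ^ 2 - 1)^2" .
  have c: "1 - x\<^sup>2 = 2 - s x ^ 2" using a by simp
  show ?thesis unfolding u1_def u2_def kk_def power_mult_distrib power_divide a b c
    using s_pos[of x] by (simp add: field_simps) algebra
qed

lemma K_top: "(K \<longlongrightarrow> 1392/35 - 13*pi) at_top"
  unfolding K_def [abs_def] s_def by real_asymp
lemma K_bot: "(K \<longlongrightarrow> -(1392/35 - 13*pi)) at_bot"
  unfolding K_def [abs_def] s_def by real_asymp

lemma lnr: fixes r :: real assumes "1 \<le> r" shows "2 * ln r \<le> r - 1/r"
proof -
  have "(\<lambda>r. r - 1/r - 2*ln r) 1 \<le> (\<lambda>r. r - 1/r - 2*ln r) r"
  proof (rule DERIV_nonneg_imp_nondecreasing[where f="\<lambda>r. r - 1/r - 2*ln r"])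
    show "1 \<le> r" by (rule assms)
  next
    fix y :: real assume y: "1 \<le> y" "y \<le> r"
    have "((\<lambda>r. r - 1/r - 2*ln r) has_real_derivative (1 - 1/y)^2) (at y)"
      using y by (auto intro!: derivative_eq_intros simp: field_simps power2_eq_square)
    then show "\<exists>z. ((\<lambda>r. r - 1/r - 2*ln r) has_real_derivative z) (at y) \<and> 0 \<le> z" by auto
  qed
  then show ?thesis by simp
qed

lemma f1_bounds: "0 \<le> f1 x" "f1 x ^ 2 \<le> 4 * (s x - 2 + 1 / s x)" "f1 x ^ 3 \<le> 8 * (1 + x\<^sup>2)"
proof -
  define r where "r = sqrt (s x)"
  have r1: "1 \<le> r" unfolding r_def using s_ge1[of x] by simp
  have r2: "r ^ 2 = s x" unfolding r_def using s_pos[of x] by simp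
  have r4: "r ^ 4 = 1 + x\<^sup>2" using r2 s_sq[of x] by (metis numeral_Bit0 power_add mult_2 power_mult)
  have lq: "f1 x = 4 * ln r" unfolding f1_def r4[symmetric] ln_realpow by simp
  have up: "f1 x \<le> 2 * (r - 1/r)" using lq lnr[OF r1] by simp
  show f0: "0 \<le> f1 x" unfolding f1_def by simp
  have "f1 x ^ 2 \<le> (2 * (r - 1/r))^2" using f0 up by (simp add: power_mono)
  also have "\<dots> = 4 * (r^2 - 2 + 1/r^2)" using r1 by (simp add: field_simps power2_eq_square)
  finally show "f1 x ^ 2 \<le> 4 * (s x - 2 + 1 / s x)" using r2 by simp
  have "0 \<le> 2 / r" using r1 by simp
  moreover have "2*(r-1/r) = 2*r - 2/r" by (simp add: algebra_simps)
  ultimately have "f1 x \<le> 2 * r" using up by linarith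
  then have "f1 x ^ 3 \<le> (2*r)^3" using f0 by (rule power_mono)
  also have "\<dots> = 8 * r^3" by simp
  also have "\<dots> \<le> 8 * r^4" using r1 by (simp add: power_increasing)
  finally show "f1 x ^ 3 \<le> 8 * (1 + x\<^sup>2)" using r4 by simp
qed

lemma intbound:
  fixes f :: "real \<Rightarrow> real"
  assumes c: "\<And>x. isCont f x" and b: "\<And>x. \<bar>f x\<bar> \<le> C / (1+x\<^sup>2)"
  shows "integrable lborel f"
proof -
  have i1: "integrable lborel (\<lambda>x::real. C * (1/(1+x\<^sup>2)))" using int_inv by (rule integrable_mult_right)
  have m: "f \<in> borel_measurable lborel"
    using c by (simp add: borel_measurable_continuous_onI continuous_at_imp_continuous_on)
  show ?thesis
    by (rule Bochner_Integration.integrable_bound[OF i1 m])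
       (use b pos1 in \<open>auto intro!: AE_I2 order_trans[OF b] divide_right_mono\<close>)
qed

definition Dfun :: "real \<Rightarrow> real" where
  "Dfun x = u3 x * f1 x ^ 3 - 3 * u2 x * f1 x ^ 2 * u1 x + 2 * f1 x * u1 x ^ 3"
definition Dp :: "real \<Rightarrow> real" where
  "Dp x = u4 x * f1 x ^ 3 - 3 * u2 x ^ 2 * f1 x ^ 2 + 2 * u1 x ^ 4"

lemma dD: "(Dfun has_real_derivative Dp x) (at x)"
  unfolding Dfun_def [abs_def] Dp_def
  by (auto intro!: derivative_eq_intros d0 d1 d2 d3; algebra)

lemma D_top: "(Dfun \<longlongrightarrow> 0) at_top"
  unfolding Dfun_def [abs_def] f1_def u1_def u2_def u3_def by real_asymp
lemma D_bot: "(Dfun \<longlongrightarrow> 0) at_bot"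
  unfolding Dfun_def [abs_def] f1_def u1_def u2_def u3_def by real_asymp

lemma cont_s: "isCont s x" unfolding s_def [abs_def] by (auto intro!: continuous_intros)
lemma cont_u4: "isCont u4 x" unfolding u4_def [abs_def] using pos1[of x]
  by (auto intro!: continuous_intros)
lemma cont_kk: "isCont kk x" unfolding kk_def [abs_def] using s_pos[of x]
  by (auto intro!: continuous_intros cont_s)
lemma cont_Dp: "isCont Dp x" unfolding Dp_def [abs_def]
  by (auto intro!: continuous_intros cont_u4 DERIV_isCont[OF d0] DERIV_isCont[OF d1] DERIV_isCont[OF d2])

lemma qfacts: "1 + x\<^sup>2 \<ge> (1::real)" "x\<^sup>2 = (1 + x\<^sup>2) - 1" "x ^ 4 = ((1 + x\<^sup>2) - 1)\<^sup>2"
  by (simp_all add: power2_eq_square power4_eq_xxxx)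

lemma b_g: "\<bar>u4 x * f1 x ^ 3\<bar> \<le> 288 / (1 + x\<^sup>2)"
proof -
  define q where "q = 1 + x\<^sup>2"
  have q1: "q \<ge> 1" unfolding q_def by simp
  have u4q: "u4 x = 12 * (8*q - q\<^sup>2 - 8) / q^4"
    unfolding u4_def q_def qfacts(3) by (simp add: algebra_simps power2_eq_square)
  have sq: "(q-1)\<^sup>2 \<ge> 0" "q\<^sup>2 \<ge> 1" using q1 by (simp_all add: one_le_power)
  have n: "\<bar>8*q - q\<^sup>2 - 8\<bar> \<le> 3 * q\<^sup>2"
    using sq q1 by (simp add: abs_le_iff power2_eq_square algebra_simps)
  have a4: "\<bar>u4 x\<bar> \<le> 36 / q\<^sup>2"
  proof -
    have "\<bar>u4 x\<bar> = \<bar>12\<bar> * \<bar>8*q - q\<^sup>2 - 8\<bar> / \<bar>q^4\<bar>" unfolding u4q abs_divide abs_mult ..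
    also have "\<dots> = 12 * \<bar>8*q - q\<^sup>2 - 8\<bar> / q^4" using q1 by simp
    also have "\<dots> \<le> 12 * (3 * q\<^sup>2) / q^4" using n q1 by (intro divide_right_mono mult_left_mono) auto
    also have "\<dots> = 36 / q\<^sup>2" using q1 by (simp add: field_simps power2_eq_square power4_eq_xxxx)
    finally show ?thesis .
  qed
  have f3: "0 \<le> f1 x ^ 3" "f1 x ^ 3 \<le> 8 * q" using f1_bounds[of x] unfolding q_def by auto
  have "\<bar>u4 x * f1 x ^ 3\<bar> = \<bar>u4 x\<bar> * f1 x ^ 3" using f3 by (simp add: abs_mult)
  also have "\<dots> \<le> 36 / q\<^sup>2 * (8 * q)" using a4 f3 by (intro mult_mono) auto
  also have "\<dots> = 288 / q" using q1 by (simp add: field_simps power2_eq_square)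
  finally show ?thesis unfolding q_def .
qed

lemma b_a: "\<bar>u2 x ^ 2 * f1 x ^ 2\<bar> \<le> 16 / (1 + x\<^sup>2)"
proof -
  define q where "q = 1 + x\<^sup>2"
  have q1: "q \<ge> 1" unfolding q_def by simp
  have u2q: "u2 x ^ 2 = 4 * (2 - q)\<^sup>2 / q^4"
    unfolding u2_def q_def by (simp add: algebra_simps power2_eq_square power4_eq_xxxx)
  have n: "(2 - q)\<^sup>2 \<le> q\<^sup>2" using q1 by (simp add: power2_eq_square algebra_simps)
  have a2: "u2 x ^ 2 \<le> 4 / q\<^sup>2"
  proof -
    have "u2 x ^ 2 \<le> 4 * q\<^sup>2 / q^4" unfolding u2q using n q1 by (intro divide_right_mono mult_left_mono) auto
    also have "\<dots> = 4 / q\<^sup>2" using q1 by (simp add: field_simps power2_eq_square power4_eq_xxxx)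
    finally show ?thesis .
  qed
  have "s x * 1 \<le> s x * s x" by (rule mult_left_mono) (use s_ge1[of x] s_pos[of x] in auto)
  then have sq: "s x \<le> q" using s_sq[of x] unfolding q_def by (simp add: power2_eq_square)
  have "1 / s x \<le> 1" using s_ge1[of x] by simp
  then have h: "s x - 2 + 1 / s x \<le> q" using sq by linarith
  have f2: "f1 x ^ 2 \<le> 4 * q" by (rule order_trans[OF f1_bounds(2)[of x]]) (use h in simp)
  have "\<bar>u2 x ^ 2 * f1 x ^ 2\<bar> = u2 x ^ 2 * f1 x ^ 2" by simp
  also have "\<dots> \<le> 4 / q\<^sup>2 * (4 * q)" using a2 f2 by (intro mult_mono) auto
  also have "\<dots> = 16 / q" using q1 by (simp add: field_simps power2_eq_square)
  finally show ?thesis unfolding q_def .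
qed

lemma b_b: "\<bar>u1 x ^ 4\<bar> \<le> 16 / (1 + x\<^sup>2)"
proof -
  define q where "q = 1 + x\<^sup>2"
  have q1: "q \<ge> 1" unfolding q_def by simp
  have u1q: "u1 x ^ 4 = 16 * (q - 1)\<^sup>2 / q^4"
    unfolding u1_def q_def power_divide qfacts(3)[symmetric] by (simp add: power_mult_distrib)
  have n: "(q - 1)\<^sup>2 \<le> q\<^sup>2" using q1 by (simp add: power2_eq_square algebra_simps)
  have "\<bar>u1 x ^ 4\<bar> = u1 x ^ 4" by simp
  also have "\<dots> \<le> 16 * q\<^sup>2 / q^4" unfolding u1q using n q1 by (intro divide_right_mono mult_left_mono) auto
  also have "\<dots> = 16 / (q * q)" using q1 by (simp add: field_simps power2_eq_square power4_eq_xxxx)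
  also have "\<dots> \<le> 16 / (q * 1)" using q1 by (intro divide_left_mono mult_left_mono) auto
  also have "\<dots> = 16 / q" by simp
  finally show ?thesis unfolding q_def .
qed

lemma inv_s_pow: "n \<ge> 2 \<Longrightarrow> 1 / s x ^ n \<le> 1 / (1 + x\<^sup>2)"
proof -
  assume "n \<ge> 2"
  then have "s x ^ 2 \<le> s x ^ n" using power_increasing[OF _ s_ge1[of x]] by blast
  then have "1 / s x ^ n \<le> 1 / s x ^ 2" using s_pos[of x] by (intro divide_left_mono) auto
  then show ?thesis by (simp add: s_sq)
qed

lemma b_kk: "\<bar>kk x\<bar> \<le> 1376 / (1 + x\<^sup>2)"
proof -
  have p: "\<And>n. 0 \<le> 1 / s x ^ n" using s_pos[of x] by simp
  have "\<bar>kk x\<bar> \<le> 48/s x^3 + 144/s x^5 + 192/s x^9 + 128/s x^4 + 448/s x^6 + 416/s x^8"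
    unfolding kk_def using p[of 3] p[of 5] p[of 9] p[of 4] p[of 6] p[of 8] by (simp add: abs_le_iff)
  also have "\<dots> \<le> 1376 / (1 + x\<^sup>2)"
    using inv_s_pow[of 3 x] inv_s_pow[of 5 x] inv_s_pow[of 9 x] inv_s_pow[of 4 x] inv_s_pow[of 6 x] inv_s_pow[of 8 x]
    by (simp add: divide_inverse)
  finally show ?thesis .
qed

definition ff :: "real \<Rightarrow> real" where "ff x = Dp x + kk x"
definition FF :: "real \<Rightarrow> real" where "FF x = Dfun x + K x"

lemma dFF: "(FF has_real_derivative ff x) (at x)"
  unfolding FF_def [abs_def] ff_def by (intro DERIV_add dD dK)

lemma cont_ff: "isCont ff x"
  unfolding ff_def [abs_def] by (intro continuous_intros cont_Dp cont_kk)

lemma b_ff: "\<bar>ff x\<bar> \<le> 1744 / (1 + x\<^sup>2)"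
proof -
  have "\<bar>ff x\<bar> \<le> \<bar>u4 x * f1 x ^ 3\<bar> + 3 * \<bar>u2 x ^ 2 * f1 x ^ 2\<bar> + 2 * \<bar>u1 x ^ 4\<bar> + \<bar>kk x\<bar>"
  proof -
    have e: "3 * u2 x ^ 2 * f1 x ^ 2 = 3 * (u2 x ^ 2 * f1 x ^ 2)" by simp
    show ?thesis unfolding ff_def Dp_def e abs_le_iff
      using abs_ge_self[of "u4 x * f1 x ^ 3"] abs_ge_minus_self[of "u4 x * f1 x ^ 3"]
        abs_ge_self[of "u2 x ^ 2 * f1 x ^ 2"] abs_ge_minus_self[of "u2 x ^ 2 * f1 x ^ 2"]
        abs_ge_self[of "u1 x ^ 4"] abs_ge_minus_self[of "u1 x ^ 4"]
        abs_ge_self[of "kk x"] abs_ge_minus_self[of "kk x"] by linarith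
  qed
  also have "\<dots> \<le> 288 / (1 + x\<^sup>2) + 3 * (16 / (1 + x\<^sup>2)) + 2 * (16 / (1 + x\<^sup>2)) + 1376 / (1 + x\<^sup>2)"
    using b_g[of x] b_a[of x] b_b[of x] b_kk[of x] by linarith
  also have "\<dots> = 1744 / (1 + x\<^sup>2)" by (simp add: field_simps)
  finally show ?thesis .
qed

lemma b_g': "\<bar>u4 x * f1 x ^ 3\<bar> \<le> 288 / (1 + x\<^sup>2)" by (rule b_g)

lemma cont_g: "isCont (\<lambda>x. u4 x * f1 x ^ 3) x"
  by (intro continuous_intros cont_u4 DERIV_isCont[OF d0])

lemma g_le: "u4 x * f1 x ^ 3 \<le> ff x"
proof -
  have "f1 x ^ 2 * u2 x ^ 2 \<le> 4 * (s x - 2 + 1 / s x) * u2 x ^ 2"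
    using f1_bounds(2)[of x] by (intro mult_right_mono) auto
  then show ?thesis unfolding ff_def Dp_def kk_eq[symmetric] by (simp add: algebra_simps)
qed

lemma int_ff: "integrable lborel ff" by (rule intbound[OF cont_ff b_ff])
lemma int_g: "integrable lborel (\<lambda>x. u4 x * f1 x ^ 3)" by (rule intbound[OF cont_g b_g])

lemma int_ff_val: "(\<integral>x. ff x \<partial>lborel) = 2784/35 - 26 * pi"
proof -
  have "(LBINT x=-\<infinity>..\<infinity>. ff x) = (1392/35 - 13*pi) - (-(1392/35 - 13*pi))"
  proof (rule interval_integral_FTC_integrable[where F=FF])
    show "- \<infinity> < (\<infinity>::ereal)" by simp
    fix x :: real
    show "(FF has_vector_derivative ff x) (at x)"
      using dFF[of x] by (simp add: has_real_derivative_iff_has_vector_derivative)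
    show "isCont ff x" by (rule cont_ff)
  next
    show "set_integrable lborel (einterval (-\<infinity>) \<infinity>) ff"
      using int_ff by (simp add: set_integrable_def)
    show "((FF \<circ> real_of_ereal) \<longlongrightarrow> -(1392/35 - 13*pi)) (at_right (-\<infinity>))"
      unfolding ereal_tendsto_simps1 FF_def [abs_def]
      using tendsto_add[OF D_bot K_bot] by simp
    show "((FF \<circ> real_of_ereal) \<longlongrightarrow> (1392/35 - 13*pi)) (at_left \<infinity>)"
      unfolding ereal_tendsto_simps1 FF_def [abs_def]
      using tendsto_add[OF D_top K_top] by simp
  qed
  moreover have "(LBINT x=-\<infinity>..\<infinity>. ff x) = (\<integral>x. ff x \<partial>lborel)"
    by (simp add: interval_lebesgue_integral_def set_lebesgue_integral_def)
  ultimately show ?thesis by simp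
qed

theorem lemma2p2:
  shows "integrable lborel (\<lambda>x. (deriv ^^ 4) f1 x * (f1 x) ^ 3) \<and>
         (\<integral>x. (deriv ^^ 4) f1 x * (f1 x) ^ 3 \<partial>lborel) < 0"
proof -
  have e: "(\<lambda>x. (deriv ^^ 4) f1 x * (f1 x) ^ 3) = (\<lambda>x. u4 x * f1 x ^ 3)" by (simp add: D4)
  have "(\<integral>x. u4 x * f1 x ^ 3 \<partial>lborel) \<le> (\<integral>x. ff x \<partial>lborel)"
    by (rule integral_mono[OF int_g int_ff g_le])
  also have "\<dots> < 0" unfolding int_ff_val using pi_approx by simp
  finally show ?thesis unfolding e using int_g by simp
qed

end
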